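(* Let $P_M=\frac{1}{2M}\sum_{i=1}^N\frac{\sigma_n^2d_i^\alpha}{\sigma_{v,i}^2}$. (a) For every $M\ge1$, $\mathrm{MSE}^{(M)}(P_M)\le\dfrac{1}{\sigma_\theta^{-2}+\frac13\sum_{i=1}^N\sigma_{v,i}^{-2}}$. (b) For every $\mathbf{h}$ with all entries nonzero and every $M\ge1$, $\dfrac{\sigma_\theta^2}{1+\zeta_M}\le\mathrm{MSE}_s(P_M;\mathbf{h})<\sigma_\theta^2$, where $\zeta_M=\frac{\mathbf{h}^H\mathbf{h}}{2M}\sum_{i=1}^N\frac{\sigma_\theta^2d_i^\alpha}{\sigma_{v,i}^2}$; if $\mathbf{h}$ has independent entries $h_i\sim\mathcal{CN}(0,d_i^{-\alpha})$ then $\zeta_M\to0$ in probability as $M\to\infty$. (c) For every $M$, $P>0$ and $\mathbf{h}$ with nonzero entries, both $\mathrm{MSE}^{(M)}(P)$ and $\mathrm{MSE}_s(P;\mathbf{h})$ are at least $\dfrac{1}{\sigma_\theta^{-2}+\sum_{i=1}^N\sigma_{v,i}^{-2}}$, are nonincreasing in $P$, and converge to this value as $P\to\infty$.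
   Context: Constants: $\sigma_\theta^2,\sigma_n^2>0$, $\sigma_{v,i}^2>0$, $d_i>0$, $\alpha>0$; $\mathbf{V}=\mathrm{diag}\{\sigma_{v,i}^2\}$. The LMMSE estimator of $\theta\sim\mathcal{CN}(0,\sigma_\theta^2)$ has mean squared error $1/(\sigma_\theta^{-2}+\text{SNR})$ in the multi-antenna case and $\sigma_\theta^2/(1+\text{SNR})$ in the single-antenna case. Multi-antenna (large-$M$): $g_M(x)=\sum_{i=1}^N\frac{Mx_i}{\sigma_n^2d_i^\alpha+\sigma_{v,i}^2Mx_i}$ for $x\in[0,\infty)^N$, $G_M(P)=\max\{g_M(x):x\ge0,\sum_ix_i=P\}$, $\mathrm{MSE}^{(M)}(P)=1/(\sigma_\theta^{-2}+G_M(P))$. Single-antenna: for $\mathbf{h}\in\mathbb{C}^N$, $\mathbf{F}=\mathrm{diag}\{h_i\}$, $\rho(\mathbf{a})=\frac{\sigma_\theta^2\mathbf{a}^H\mathbf{h}\mathbf{h}^H\mathbf{a}}{\mathbf{a}^H\mathbf{F}\mathbf{V}\mathbf{F}^H\mathbf{a}+\sigma_n^2}$, $S(P;\mathbf{h})=\max\{\rho(\mathbf{a}):\mathbf{a}^H\mathbf{a}=P\}$, and $\mathrm{MSE}_s(P;\mathbf{h})=\sigma_\theta^2/(1+S(P;\mathbf{h}))$. *)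

theory Defs
  imports "HOL-Probability.Probability"
begin

text \<open>Sensors are indexed by a finite type 'n (so N = CARD('n)).
  Parameters: st2 = sigma_theta^2, sn2 = sigma_n^2, sv2 i = sigma_{v,i}^2,
  d i = d_i, al = alpha, M = number of antennas.\<close>

definition gM :: "real \<Rightarrow> ('n::finite \<Rightarrow> real) \<Rightarrow> ('n \<Rightarrow> real) \<Rightarrow> real \<Rightarrow> nat \<Rightarrow> ('n \<Rightarrow> real) \<Rightarrow> real" where
  "gM sn2 sv2 d al M x =
     (\<Sum>i\<in>UNIV. real M * x i / (sn2 * d i powr al + sv2 i * real M * x i))"

definition GM :: "real \<Rightarrow> ('n::finite \<Rightarrow> real) \<Rightarrow> ('n \<Rightarrow> real) \<Rightarrow> real \<Rightarrow> nat \<Rightarrow> real \<Rightarrow> real" where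
  "GM sn2 sv2 d al M P =
     Sup (gM sn2 sv2 d al M ` {x. (\<forall>i. 0 \<le> x i) \<and> (\<Sum>i\<in>UNIV. x i) = P})"

definition MSE_multi :: "real \<Rightarrow> real \<Rightarrow> ('n::finite \<Rightarrow> real) \<Rightarrow> ('n \<Rightarrow> real) \<Rightarrow> real \<Rightarrow> nat \<Rightarrow> real \<Rightarrow> real" where
  "MSE_multi st2 sn2 sv2 d al M P = 1 / (1 / st2 + GM sn2 sv2 d al M P)"

text \<open>rho(a) = st2 a^H h h^H a / (a^H F V F^H a + sn2), with F = diag h, V = diag sv2,
  written out: a^H h h^H a = |a^H h|^2 and a^H F V F^H a = sum |a_i|^2 |h_i|^2 sv2_i.\<close>

definition rho :: "real \<Rightarrow> real \<Rightarrow> ('n::finite \<Rightarrow> real) \<Rightarrow> ('n \<Rightarrow> complex) \<Rightarrow> ('n \<Rightarrow> complex) \<Rightarrow> real" where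
  "rho st2 sn2 sv2 h a =
     st2 * (cmod (\<Sum>i\<in>UNIV. cnj (a i) * h i))\<^sup>2 /
     ((\<Sum>i\<in>UNIV. (cmod (a i))\<^sup>2 * (cmod (h i))\<^sup>2 * sv2 i) + sn2)"

definition S_single :: "real \<Rightarrow> real \<Rightarrow> ('n::finite \<Rightarrow> real) \<Rightarrow> ('n \<Rightarrow> complex) \<Rightarrow> real \<Rightarrow> real" where
  "S_single st2 sn2 sv2 h P =
     Sup (rho st2 sn2 sv2 h ` {a. (\<Sum>i\<in>UNIV. (cmod (a i))\<^sup>2) = P})"

definition MSE_single :: "real \<Rightarrow> real \<Rightarrow> ('n::finite \<Rightarrow> real) \<Rightarrow> ('n \<Rightarrow> complex) \<Rightarrow> real \<Rightarrow> real" where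
  "MSE_single st2 sn2 sv2 h P = st2 / (1 + S_single st2 sn2 sv2 h P)"

definition P_M :: "real \<Rightarrow> ('n::finite \<Rightarrow> real) \<Rightarrow> ('n \<Rightarrow> real) \<Rightarrow> real \<Rightarrow> nat \<Rightarrow> real" where
  "P_M sn2 sv2 d al M = 1 / (2 * real M) * (\<Sum>i\<in>UNIV. sn2 * d i powr al / sv2 i)"

definition zeta :: "real \<Rightarrow> ('n::finite \<Rightarrow> real) \<Rightarrow> ('n \<Rightarrow> real) \<Rightarrow> real \<Rightarrow> ('n \<Rightarrow> complex) \<Rightarrow> nat \<Rightarrow> real" where
  "zeta st2 sv2 d al h M =
     (\<Sum>i\<in>UNIV. (cmod (h i))\<^sup>2) / (2 * real M) * (\<Sum>i\<in>UNIV. st2 * d i powr al / sv2 i)"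

definition cn_density :: "real \<Rightarrow> complex \<Rightarrow> real" where
  "cn_density s z = exp (- (cmod z)\<^sup>2 / s) / (pi * s)"

end

theory Submission
  imports Defs
begin

lemma term_le:
  fixes c s m t :: real
  assumes "c > 0" "s > 0" "m \<ge> 0" "t \<ge> 0"
  shows "m * t / (c + s * m * t) \<le> 1 / s"
proof -
  have d: "c + s * m * t > 0" using assms by (simp add: add_pos_nonneg)
  show ?thesis using assms d by (simp add: divide_simps)
qed

lemma term_mono:
  fixes c s m t u :: real
  assumes "c > 0" "s > 0" "m \<ge> 0" "t \<ge> 0" "t \<le> u"
  shows "m * t / (c + s * m * t) \<le> m * u / (c + s * m * u)"
proof -
  have d: "c + s * m * t > 0" "c + s * m * u > 0" using assms by (simp_all add: add_pos_nonneg)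
  have "m * t * (c + s * m * u) \<le> m * u * (c + s * m * t)"
    using assms by (simp add: algebra_simps mult_left_mono)
  then show ?thesis using d by (simp add: divide_simps)
qed

lemma term_nonneg:
  fixes c s m t :: real
  assumes "c > 0" "s > 0" "m \<ge> 0" "t \<ge> 0"
  shows "0 \<le> m * t / (c + s * m * t)"
  using assms by (simp add: add_pos_nonneg)

lemma term_lim:
  fixes c s m k :: real
  assumes "c > 0" "s > 0" "m > 0" "k > 0"
  shows "((\<lambda>P. m * (P / k) / (c + s * m * (P / k))) \<longlongrightarrow> 1 / s) at_top"
proof -
  have ev: "eventually (\<lambda>P. 1 / (c * k / m * inverse P + s) = m * (P / k) / (c + s * m * (P / k))) at_top"
    using eventually_gt_at_top[of 0]
  proof eventually_elim
    case (elim P)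
    then show ?case using assms by (simp add: field_simps)
  qed
  have "((\<lambda>P. c * k / m * inverse P) \<longlongrightarrow> 0) at_top"
    by (intro tendsto_mult_right_zero tendsto_inverse_0_at_top filterlim_ident)
  then have "((\<lambda>P. 1 / (c * k / m * inverse P + s)) \<longlongrightarrow> 1 / (0 + s)) at_top"
    using assms by (intro tendsto_divide tendsto_add tendsto_const) auto
  then show ?thesis using ev by (simp add: tendsto_cong)
qed


definition simp_set :: "real \<Rightarrow> ('n::finite \<Rightarrow> real) set" where
  "simp_set P = {x. (\<forall>i. 0 \<le> x i) \<and> (\<Sum>i\<in>UNIV. x i) = P}"

context
  fixes sn2 :: real and sv2 d :: "'n::finite \<Rightarrow> real" and al :: real
  assumes sn2: "sn2 > 0" and sv2: "\<And>i. sv2 i > 0" and d: "\<And>i. d i > 0"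
begin

lemma c_pos: "sn2 * d i powr al > 0" using sn2 d[of i] by simp

lemma gM_le: assumes "\<forall>i. 0 \<le> x i" shows "gM sn2 sv2 d al M x \<le> (\<Sum>i\<in>UNIV. 1 / sv2 i)"
  unfolding gM_def by (rule sum_mono, rule term_le) (use c_pos sv2 assms in auto)

lemma gM_nonneg: assumes "\<forall>i. 0 \<le> x i" shows "0 \<le> gM sn2 sv2 d al M x"
  unfolding gM_def by (rule sum_nonneg, rule term_nonneg) (use c_pos sv2 assms in auto)

lemma bdd: "bdd_above (gM sn2 sv2 d al M ` simp_set P)"
proof (rule bdd_aboveI)
  fix y assume "y \<in> gM sn2 sv2 d al M ` simp_set P"
  then obtain x where "x \<in> simp_set P" "y = gM sn2 sv2 d al M x" by blast
  then show "y \<le> (\<Sum>i\<in>UNIV. 1 / sv2 i)" using gM_le[of x M] by (simp add: simp_set_def)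
qed

lemma const_in: assumes "P \<ge> 0" shows "(\<lambda>_::'n. P / real CARD('n)) \<in> simp_set P"
  using assms by (simp add: simp_set_def)

lemma GM_eq: "GM sn2 sv2 d al M P = Sup (gM sn2 sv2 d al M ` simp_set P)"
  unfolding GM_def simp_set_def by simp

lemma GM_ge: "x \<in> simp_set P \<Longrightarrow> gM sn2 sv2 d al M x \<le> GM sn2 sv2 d al M P"
  unfolding GM_eq by (rule cSUP_upper[OF _ bdd])

lemma GM_le: assumes P: "P \<ge> 0" shows "GM sn2 sv2 d al M P \<le> (\<Sum>i\<in>UNIV. 1 / sv2 i)"
  unfolding GM_eq
proof (rule cSUP_least)
  show "(simp_set P :: ('n \<Rightarrow> real) set) \<noteq> {}" using const_in[OF P] by (metis empty_iff)
next
  fix x :: "'n \<Rightarrow> real" assume "x \<in> simp_set P" then show "gM sn2 sv2 d al M x \<le> (\<Sum>i\<in>UNIV. 1 / sv2 i)"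
    using gM_le[of x M] by (simp add: simp_set_def)
qed

lemma GM_nonneg: "P \<ge> 0 \<Longrightarrow> 0 \<le> GM sn2 sv2 d al M P"
  by (rule order_trans[OF gM_nonneg GM_ge[OF const_in]]) auto

lemma GM_mono: assumes "0 \<le> P" "P \<le> Q" shows "GM sn2 sv2 d al M P \<le> GM sn2 sv2 d al M Q"
  unfolding GM_eq[of M P]
proof (rule cSUP_least)
  show "(simp_set P :: ('n \<Rightarrow> real) set) \<noteq> {}" using const_in[OF assms(1)] by (metis empty_iff)
  fix x :: "'n \<Rightarrow> real" assume x: "x \<in> simp_set P"
  define y where "y = (\<lambda>i. x i + (if i = undefined then Q - P else 0))"
  have y: "y \<in> simp_set Q" using x assms
    by (auto simp: simp_set_def y_def sum.distrib)
  have "gM sn2 sv2 d al M x \<le> gM sn2 sv2 d al M y"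
    unfolding gM_def by (rule sum_mono, rule term_mono) (use c_pos sv2 x assms in \<open>auto simp: y_def simp_set_def\<close>)
  also have "\<dots> \<le> GM sn2 sv2 d al M Q" by (rule GM_ge[OF y])
  finally show "gM sn2 sv2 d al M x \<le> GM sn2 sv2 d al M Q" .
qed

lemma GM_lim: assumes "M \<ge> 1"
  shows "(GM sn2 sv2 d al M \<longlongrightarrow> (\<Sum>i\<in>UNIV. 1 / sv2 i)) at_top"
proof (rule tendsto_sandwich)
  show "((\<lambda>P. gM sn2 sv2 d al M (\<lambda>_::'n. P / real CARD('n))) \<longlongrightarrow> (\<Sum>i\<in>UNIV. 1 / sv2 i)) at_top"
    unfolding gM_def by (rule tendsto_sum, rule term_lim) (use c_pos sv2 assms in auto)
  show "eventually (\<lambda>P. gM sn2 sv2 d al M (\<lambda>_::'n. P / real CARD('n)) \<le> GM sn2 sv2 d al M P) at_top"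
    using eventually_ge_at_top[of 0] by eventually_elim (rule GM_ge[OF const_in])
  show "eventually (\<lambda>P. GM sn2 sv2 d al M P \<le> (\<Sum>i\<in>UNIV. 1 / sv2 i)) at_top"
    using eventually_ge_at_top[of 0] by eventually_elim (rule GM_le)
qed auto

end

definition a_set :: "real \<Rightarrow> ('n::finite \<Rightarrow> complex) set" where
  "a_set P = {a. (\<Sum>i\<in>UNIV. (cmod (a i))\<^sup>2) = P}"

lemma frac_mono_aux:
  fixes N D s u :: real
  assumes "N \<ge> 0" "D \<ge> 0" "s > 0" "u \<ge> 1"
  shows "N / (D + s) \<le> u * N / (u * D + s)"
proof -
  have p: "D + s > 0" "u * D + s > 0" using assms by (auto intro: add_nonneg_pos)
  have "s \<le> s * u" using assms by simp
  then have "N * s \<le> N * (s * u)" using assms by (intro mult_left_mono) auto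
  then have "N * (u * D + s) \<le> u * N * (D + s)"
    by (simp add: algebra_simps)
  then show ?thesis using p by (simp add: divide_simps)
qed

context
  fixes st2 sn2 :: real and sv2 :: "'n::finite \<Rightarrow> real" and h :: "'n \<Rightarrow> complex"
  assumes st2: "st2 > 0" and sn2: "sn2 > 0" and sv2: "\<And>i. sv2 i > 0"
begin

lemma SV_pos: "(\<Sum>i\<in>UNIV. 1 / sv2 i) > 0"
  by (rule sum_pos) (use sv2 in auto)

lemma num_le: "(cmod (\<Sum>i\<in>UNIV. cnj (a i) * h i))\<^sup>2 \<le> (\<Sum>i\<in>UNIV. cmod (a i) * cmod (h i))\<^sup>2"
proof -
  have "cmod (\<Sum>i\<in>UNIV. cnj (a i) * h i) \<le> (\<Sum>i\<in>UNIV. cmod (cnj (a i) * h i))"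
    by (rule norm_sum)
  also have "\<dots> = (\<Sum>i\<in>UNIV. cmod (a i) * cmod (h i))" by (simp add: norm_mult)
  finally show ?thesis by (rule power_mono) simp
qed

lemma den_nonneg: "0 \<le> (\<Sum>i\<in>UNIV. (cmod (a i))\<^sup>2 * (cmod (h i))\<^sup>2 * sv2 i)"
  by (intro sum_nonneg mult_nonneg_nonneg) (auto simp: less_imp_le[OF sv2])

lemma rho_nonneg: "0 \<le> rho st2 sn2 sv2 h a"
  unfolding rho_def using st2 sn2 den_nonneg[of a] by (auto intro!: divide_nonneg_pos add_nonneg_pos)

lemma rho_le1: "rho st2 sn2 sv2 h a \<le> st2 * (\<Sum>i\<in>UNIV. 1 / sv2 i)"
proof -
  define D where "D = (\<Sum>i\<in>UNIV. (cmod (a i))\<^sup>2 * (cmod (h i))\<^sup>2 * sv2 i)"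
  define SV where "SV = (\<Sum>i\<in>UNIV. 1 / sv2 i)"
  have D0: "D \<ge> 0" unfolding D_def by (rule den_nonneg)
  have "(\<Sum>i\<in>UNIV. cmod (a i) * cmod (h i))\<^sup>2
      = (\<Sum>i\<in>UNIV. (cmod (a i) * cmod (h i) * sqrt (sv2 i)) * (1 / sqrt (sv2 i)))\<^sup>2"
  proof -
    have "\<And>i. sqrt (sv2 i) \<noteq> 0" using sv2 by (metis less_irrefl real_sqrt_eq_zero_cancel_iff)
    then show ?thesis by simp
  qed
  also have "\<dots> \<le> (\<Sum>i\<in>UNIV. (cmod (a i) * cmod (h i) * sqrt (sv2 i))\<^sup>2) * (\<Sum>i\<in>UNIV. (1 / sqrt (sv2 i))\<^sup>2)"
    by (rule Cauchy_Schwarz_ineq_sum)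
  also have "\<dots> = D * SV"
    unfolding D_def SV_def using sv2 by (intro arg_cong2[where f="(*)"] sum.cong)
      (auto simp: power_mult_distrib power_divide less_imp_le)
  finally have N: "(cmod (\<Sum>i\<in>UNIV. cnj (a i) * h i))\<^sup>2 \<le> D * SV" using num_le[of a] by linarith
  have SV0: "SV > 0" unfolding SV_def by (rule SV_pos)
  have p: "D + sn2 > 0" using D0 sn2 by linarith
  have "rho st2 sn2 sv2 h a \<le> st2 * (D * SV) / (D + sn2)"
    unfolding rho_def D_def[symmetric] using N p st2 by (intro divide_right_mono mult_left_mono) auto
  also have "\<dots> \<le> st2 * SV"
    using p st2 SV0 D0 sn2 by (simp add: divide_simps mult_left_mono)
  finally show ?thesis unfolding SV_def .
qed

lemma rho_le2: "rho st2 sn2 sv2 h a \<le> st2 * (\<Sum>i\<in>UNIV. (cmod (a i))\<^sup>2) * (\<Sum>i\<in>UNIV. (cmod (h i))\<^sup>2) / sn2"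
proof -
  have "(\<Sum>i\<in>UNIV. cmod (a i) * cmod (h i))\<^sup>2 \<le> (\<Sum>i\<in>UNIV. (cmod (a i))\<^sup>2) * (\<Sum>i\<in>UNIV. (cmod (h i))\<^sup>2)"
    by (rule Cauchy_Schwarz_ineq_sum)
  then have N: "(cmod (\<Sum>i\<in>UNIV. cnj (a i) * h i))\<^sup>2 \<le> (\<Sum>i\<in>UNIV. (cmod (a i))\<^sup>2) * (\<Sum>i\<in>UNIV. (cmod (h i))\<^sup>2)"
    using num_le[of a] by linarith
  have D0: "0 \<le> (\<Sum>i\<in>UNIV. (cmod (a i))\<^sup>2 * (cmod (h i))\<^sup>2 * sv2 i)" by (rule den_nonneg)
  have "rho st2 sn2 sv2 h a \<le> st2 * (cmod (\<Sum>i\<in>UNIV. cnj (a i) * h i))\<^sup>2 / sn2"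
    unfolding rho_def using st2 sn2 D0 by (intro divide_left_mono) (auto intro: mult_pos_pos)
  also have "\<dots> \<le> st2 * ((\<Sum>i\<in>UNIV. (cmod (a i))\<^sup>2) * (\<Sum>i\<in>UNIV. (cmod (h i))\<^sup>2)) / sn2"
    using N st2 sn2 by (intro divide_right_mono mult_left_mono) auto
  finally show ?thesis by (simp add: mult.assoc)
qed


lemma S_eq: "S_single st2 sn2 sv2 h P = Sup (rho st2 sn2 sv2 h ` a_set P)"
  unfolding S_single_def a_set_def by simp

lemma bdd_rho: "bdd_above (rho st2 sn2 sv2 h ` a_set P)"
proof (rule bdd_aboveI)
  fix y assume "y \<in> rho st2 sn2 sv2 h ` a_set P"
  then obtain a where "y = rho st2 sn2 sv2 h a" by blast
  then show "y \<le> st2 * (\<Sum>i\<in>UNIV. 1 / sv2 i)" using rho_le1 by simp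
qed

lemma a_const_in: assumes "P \<ge> 0" shows "(\<lambda>_::'n. complex_of_real (sqrt (P / real CARD('n)))) \<in> a_set P"
  using assms by (simp add: a_set_def)

lemma a_ne: assumes "P \<ge> 0" shows "(a_set P :: ('n \<Rightarrow> complex) set) \<noteq> {}"
  using a_const_in[OF assms] by (metis empty_iff)

lemma S_ge: "a \<in> a_set P \<Longrightarrow> rho st2 sn2 sv2 h a \<le> S_single st2 sn2 sv2 h P"
  unfolding S_eq by (rule cSUP_upper[OF _ bdd_rho])

lemma S_le1: assumes P: "P \<ge> 0" shows "S_single st2 sn2 sv2 h P \<le> st2 * (\<Sum>i\<in>UNIV. 1 / sv2 i)"
  unfolding S_eq by (rule cSUP_least[OF a_ne[OF P]]) (rule rho_le1)

lemma S_le2: assumes P: "P \<ge> 0"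
  shows "S_single st2 sn2 sv2 h P \<le> st2 * P * (\<Sum>i\<in>UNIV. (cmod (h i))\<^sup>2) / sn2"
  unfolding S_eq
proof (rule cSUP_least[OF a_ne[OF P]])
  fix a :: "'n \<Rightarrow> complex" assume "a \<in> a_set P"
  then show "rho st2 sn2 sv2 h a \<le> st2 * P * (\<Sum>i\<in>UNIV. (cmod (h i))\<^sup>2) / sn2"
    using rho_le2[of a] by (simp add: a_set_def)
qed

lemma S_nonneg: assumes P: "P \<ge> 0" shows "0 \<le> S_single st2 sn2 sv2 h P"
  by (rule order_trans[OF rho_nonneg S_ge[OF a_const_in[OF P]]])

lemma S_mono: assumes P: "0 < P" "P \<le> Q" shows "S_single st2 sn2 sv2 h P \<le> S_single st2 sn2 sv2 h Q"
  unfolding S_eq[of P]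
proof (rule cSUP_least[OF a_ne])
  show "0 \<le> P" using P by simp
  fix a :: "'n \<Rightarrow> complex" assume a: "a \<in> a_set P"
  define t where "t = sqrt (Q / P)"
  have t2: "t\<^sup>2 = Q / P" using P by (simp add: t_def less_imp_le)
  have t1: "t\<^sup>2 \<ge> 1" using P t2 by simp
  define b where "b = (\<lambda>i. complex_of_real t * a i)"
  have tn: "t \<ge> 0" using P by (simp add: t_def)
  have "(\<Sum>i\<in>UNIV. (cmod (b i))\<^sup>2) = t\<^sup>2 * (\<Sum>i\<in>UNIV. (cmod (a i))\<^sup>2)"
    by (simp add: b_def norm_mult power_mult_distrib tn sum_distrib_left)
  also have "\<dots> = Q" using a P t2 by (simp add: a_set_def)
  finally have b: "b \<in> a_set Q" by (simp add: a_set_def)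
  have e1: "(\<Sum>i\<in>UNIV. cnj (b i) * h i) = complex_of_real t * (\<Sum>i\<in>UNIV. cnj (a i) * h i)"
    by (simp add: b_def sum_distrib_left mult.assoc)
  have e2: "(\<Sum>i\<in>UNIV. (cmod (b i))\<^sup>2 * (cmod (h i))\<^sup>2 * sv2 i) = t\<^sup>2 * (\<Sum>i\<in>UNIV. (cmod (a i))\<^sup>2 * (cmod (h i))\<^sup>2 * sv2 i)"
    by (simp add: b_def sum_distrib_left norm_mult power_mult_distrib tn mult.assoc)
  have "rho st2 sn2 sv2 h a \<le> rho st2 sn2 sv2 h b"
  proof -
    have "(cmod (\<Sum>i\<in>UNIV. cnj (a i) * h i))\<^sup>2 / ((\<Sum>i\<in>UNIV. (cmod (a i))\<^sup>2 * (cmod (h i))\<^sup>2 * sv2 i) + sn2)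
       \<le> t\<^sup>2 * (cmod (\<Sum>i\<in>UNIV. cnj (a i) * h i))\<^sup>2 / (t\<^sup>2 * (\<Sum>i\<in>UNIV. (cmod (a i))\<^sup>2 * (cmod (h i))\<^sup>2 * sv2 i) + sn2)"
      by (rule frac_mono_aux) (use den_nonneg sn2 t1 in auto)
    then show ?thesis unfolding rho_def e1 e2 using st2
      by (simp add: norm_mult power_mult_distrib tn mult.assoc times_divide_eq_right[symmetric] del: times_divide_eq_right)
  qed
  also have "\<dots> \<le> S_single st2 sn2 sv2 h Q" by (rule S_ge[OF b])
  finally show "rho st2 sn2 sv2 h a \<le> S_single st2 sn2 sv2 h Q" .
qed


lemma S_pos: assumes hnz: "\<forall>i. h i \<noteq> 0" and P: "P > 0" shows "S_single st2 sn2 sv2 h P > 0"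
proof -
  define H where "H = (\<Sum>i\<in>UNIV. (cmod (h i))\<^sup>2)"
  have H: "H > 0" unfolding H_def by (rule sum_pos) (use hnz in auto)
  define c where "c = sqrt (P / H)"
  have c: "c > 0" using P H by (simp add: c_def)
  define a where "a = (\<lambda>i. complex_of_real c * h i)"
  have "(\<Sum>i\<in>UNIV. (cmod (a i))\<^sup>2) = c\<^sup>2 * H"
    using c by (simp add: a_def H_def norm_mult power_mult_distrib sum_distrib_left)
  also have "\<dots> = P" using P H by (simp add: c_def)
  finally have a: "a \<in> a_set P" by (simp add: a_set_def)
  have "(\<Sum>i\<in>UNIV. cnj (a i) * h i) = complex_of_real c * (\<Sum>i\<in>UNIV. cnj (h i) * h i)"
    by (simp add: a_def sum_distrib_left mult.assoc)
  also have "(\<Sum>i\<in>UNIV. cnj (h i) * h i) = complex_of_real H"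
  proof -
    have "\<And>i. cnj (h i) * h i = complex_of_real ((cmod (h i))\<^sup>2)"
      by (metis complex_norm_square mult.commute)
    then show ?thesis by (simp add: H_def of_real_sum del: of_real_power)
  qed
  finally have "(\<Sum>i\<in>UNIV. cnj (a i) * h i) = complex_of_real (c * H)" by simp
  then have n: "cmod (\<Sum>i\<in>UNIV. cnj (a i) * h i) > 0" using c H by simp
  have "rho st2 sn2 sv2 h a > 0"
    unfolding rho_def using n st2 sn2 den_nonneg[of a]
    by (intro divide_pos_pos mult_pos_pos) (auto intro: add_nonneg_pos)
  then show ?thesis using S_ge[OF a] by linarith
qed

lemma S_lim: assumes hnz: "\<forall>i. h i \<noteq> 0"
  shows "(S_single st2 sn2 sv2 h \<longlongrightarrow> st2 * (\<Sum>i\<in>UNIV. 1 / sv2 i)) at_top"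
proof -
  define SV where "SV = (\<Sum>i\<in>UNIV. 1 / sv2 i)"
  have SV: "SV > 0" unfolding SV_def by (rule SV_pos)
  define B where "B = (\<Sum>i\<in>UNIV. 1 / ((sv2 i)\<^sup>2 * (cmod (h i))\<^sup>2))"
  have B: "B > 0" unfolding B_def
  proof (rule sum_pos)
    fix i have "(sv2 i)\<^sup>2 > 0" "(cmod (h i))\<^sup>2 > 0" using sv2[of i] hnz by auto
    then show "1 / ((sv2 i)\<^sup>2 * (cmod (h i))\<^sup>2) > 0" by simp
  qed auto
  define f where "f = (\<lambda>P. st2 * ((P / B) * SV\<^sup>2) / ((P / B) * SV + sn2))"
  have low: "f P \<le> S_single st2 sn2 sv2 h P" if P: "P > 0" for P
  proof -
    define k where "k = sqrt (P / B)"
    have k: "k > 0" using P B by (simp add: k_def)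
    have k2: "k\<^sup>2 = P / B" using P B by (simp add: k_def)
    define a where "a = (\<lambda>i. complex_of_real (k / sv2 i) / cnj (h i))"
    have ca: "\<And>i. (cmod (a i))\<^sup>2 = k\<^sup>2 * (1 / ((sv2 i)\<^sup>2 * (cmod (h i))\<^sup>2))"
      using k sv2 by (simp add: a_def norm_divide power_divide abs_of_pos power2_eq_square norm_mult less_imp_le)
    have "(\<Sum>i\<in>UNIV. (cmod (a i))\<^sup>2) = k\<^sup>2 * B" by (simp add: ca B_def sum_distrib_left)
    also have "\<dots> = P" using k2 B by simp
    finally have a: "a \<in> a_set P" by (simp add: a_set_def)
    have "\<And>i. cnj (a i) * h i = complex_of_real (k / sv2 i)"
      using hnz by (simp add: a_def)
    then have s1: "(\<Sum>i\<in>UNIV. cnj (a i) * h i) = complex_of_real (k * SV)"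
      by (simp add: SV_def sum_distrib_left)
    have "\<And>i. (cmod (a i))\<^sup>2 * (cmod (h i))\<^sup>2 * sv2 i = k\<^sup>2 * (1 / sv2 i)"
      using hnz sv2 unfolding ca by (simp add: power2_eq_square field_simps)
    then have s2: "(\<Sum>i\<in>UNIV. (cmod (a i))\<^sup>2 * (cmod (h i))\<^sup>2 * sv2 i) = k\<^sup>2 * SV"
      by (simp add: SV_def sum_distrib_left)
    have "rho st2 sn2 sv2 h a = f P"
      unfolding rho_def s1 s2 f_def k2[symmetric] using k SV by (simp add: power_mult_distrib abs_of_pos norm_mult)
    then show ?thesis using S_ge[OF a] by simp
  qed
  have ev: "eventually (\<lambda>P. st2 * SV\<^sup>2 / (SV + sn2 * B * inverse P) = f P) at_top"
    using eventually_gt_at_top[of 0]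
  proof eventually_elim
    case (elim P)
    then show ?case using B SV sn2 by (simp add: f_def field_simps)
  qed
  have "((\<lambda>P. sn2 * B * inverse P) \<longlongrightarrow> 0) at_top"
    by (intro tendsto_mult_right_zero tendsto_inverse_0_at_top filterlim_ident)
  then have "((\<lambda>P. st2 * SV\<^sup>2 / (SV + sn2 * B * inverse P)) \<longlongrightarrow> st2 * SV\<^sup>2 / (SV + 0)) at_top"
    using SV by (intro tendsto_divide tendsto_add tendsto_const) auto
  then have fl: "(f \<longlongrightarrow> st2 * SV) at_top"
    using ev SV by (simp add: tendsto_cong power2_eq_square)
  show ?thesis unfolding SV_def[symmetric]
  proof (rule tendsto_sandwich[OF _ _ fl tendsto_const])
    show "eventually (\<lambda>P. f P \<le> S_single st2 sn2 sv2 h P) at_top"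
      using eventually_gt_at_top[of 0] by eventually_elim (rule low)
    show "eventually (\<lambda>P. S_single st2 sn2 sv2 h P \<le> st2 * SV) at_top"
      using eventually_ge_at_top[of 0] by eventually_elim (unfold SV_def, rule S_le1)
  qed
qed

end

lemma zeta_dec:
  fixes S C :: real assumes "S \<ge> 0" "C \<ge> 0" "1 \<le> m" "m \<le> n"
  shows "S / (2 * n) * C \<le> S / (2 * m) * C"
  using assms by (intro mult_right_mono divide_left_mono) auto

lemma prob_part:
  fixes st2 al :: real and sv2 d :: "'n::finite \<Rightarrow> real" and \<Omega> :: "'w measure" and H :: "'n \<Rightarrow> 'w \<Rightarrow> complex"
  assumes st2: "st2 > 0" and sv2: "\<And>i. sv2 i > 0" and d: "\<And>i. d i > 0"
    and P: "prob_space \<Omega>" and Hm: "\<And>i. H i \<in> borel_measurable \<Omega>" and e: "\<epsilon> > 0"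
  shows "(\<lambda>M. measure \<Omega> {\<omega> \<in> space \<Omega>. \<bar>zeta st2 sv2 d al (\<lambda>i. H i \<omega>) M\<bar> > \<epsilon>}) \<longlonglongrightarrow> 0"
proof -
  interpret prob_space \<Omega> by (rule P)
  define C where "C = (\<Sum>i\<in>UNIV. st2 * d i powr al / sv2 i)"
  have C: "C \<ge> 0" unfolding C_def using st2 sv2 by (intro sum_nonneg divide_nonneg_pos mult_nonneg_nonneg) (auto intro: less_imp_le)
  define K where "K = (\<lambda>\<omega>. (\<Sum>i\<in>UNIV. (cmod (H i \<omega>))\<^sup>2))"
  have K: "\<And>\<omega>. K \<omega> \<ge> 0" unfolding K_def by (simp add: sum_nonneg)
  have Km[measurable]: "K \<in> borel_measurable \<Omega>" unfolding K_def using Hm by measurable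
  have zK: "zeta st2 sv2 d al (\<lambda>i. H i \<omega>) M = K \<omega> / (2 * real M) * C" for \<omega> M
    by (simp add: zeta_def K_def C_def)
  define A where "A = (\<lambda>n. {\<omega> \<in> space \<Omega>. \<bar>zeta st2 sv2 d al (\<lambda>i. H i \<omega>) (Suc n)\<bar> > \<epsilon>})"
  have Aeq: "A n = {\<omega> \<in> space \<Omega>. K \<omega> / (2 * real (Suc n)) * C > \<epsilon>}" for n
    unfolding A_def zK using K C by simp
  have As: "range A \<subseteq> sets \<Omega>" unfolding Aeq by auto
  have dec: "decseq A"
    unfolding decseq_Suc_iff Aeq
  proof (intro allI subsetI)
    fix n \<omega> assume "\<omega> \<in> {\<omega> \<in> space \<Omega>. \<epsilon> < K \<omega> / (2 * real (Suc (Suc n))) * C}"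
    moreover have "K \<omega> / (2 * real (Suc (Suc n))) * C \<le> K \<omega> / (2 * real (Suc n)) * C"
      by (rule zeta_dec) (use K C in auto)
    ultimately show "\<omega> \<in> {\<omega> \<in> space \<Omega>. \<epsilon> < K \<omega> / (2 * real (Suc n)) * C}" by auto
  qed
  have empty: "(\<Inter>n. A n) = {}"
  proof (rule ccontr)
    assume "(\<Inter>n. A n) \<noteq> {}"
    then obtain \<omega> where w: "\<And>n. \<omega> \<in> A n" by blast
    obtain n :: nat where n: "K \<omega> * C / (2 * \<epsilon>) < real n" using reals_Archimedean2 by blast
    have "\<epsilon> < K \<omega> / (2 * real (Suc n)) * C" using w[of n] unfolding Aeq by auto
    then have "2 * real (Suc n) * \<epsilon> < K \<omega> * C" by (simp add: field_simps)
    moreover have "K \<omega> * C < 2 * real n * \<epsilon>" using n e by (simp add: field_simps)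
    ultimately show False using e by (simp add: field_simps)
  qed
  have "(\<lambda>n. measure \<Omega> (A n)) \<longlonglongrightarrow> measure \<Omega> (\<Inter>n. A n)"
    by (rule finite_Lim_measure_decseq[OF As dec])
  then have "(\<lambda>n. measure \<Omega> (A n)) \<longlonglongrightarrow> 0" unfolding empty by simp
  then show ?thesis unfolding A_def by (rule filterlim_sequentially_Suc[THEN iffD1])
qed


lemma inv_mono_aux:
  fixes a x y c :: real
  assumes "0 < a" "0 \<le> x" "x \<le> y" "0 \<le> c"
  shows "c / (a + y) \<le> c / (a + x)"
  using assms by (intro divide_left_mono) (auto intro!: mult_pos_pos add_pos_nonneg)

theorem corollary1:
  fixes st2 sn2 al :: real and sv2 d :: "'n::finite \<Rightarrow> real"
  assumes st2: "st2 > 0" and sn2: "sn2 > 0" and al: "al > 0"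
    and sv2: "\<And>i. sv2 i > 0" and d: "\<And>i. d i > 0"
  shows
    \<comment> \<open>(a)\<close>
    "(\<forall>M::nat. M \<ge> 1 \<longrightarrow>
        MSE_multi st2 sn2 sv2 d al M (P_M sn2 sv2 d al M)
          \<le> 1 / (1 / st2 + (1/3) * (\<Sum>i\<in>UNIV. 1 / sv2 i)))
     \<comment> \<open>(b), deterministic part\<close>
     \<and> (\<forall>h :: 'n \<Rightarrow> complex. (\<forall>i. h i \<noteq> 0) \<longrightarrow>
         (\<forall>M::nat. M \<ge> 1 \<longrightarrow>
            st2 / (1 + zeta st2 sv2 d al h M)
              \<le> MSE_single st2 sn2 sv2 h (P_M sn2 sv2 d al M)
            \<and> MSE_single st2 sn2 sv2 h (P_M sn2 sv2 d al M) < st2))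
     \<comment> \<open>(b), convergence in probability\<close>
     \<and> (\<forall>(\<Omega> :: 'w measure) (H :: 'n \<Rightarrow> 'w \<Rightarrow> complex).
          prob_space \<Omega>
          \<longrightarrow> prob_space.indep_vars \<Omega> (\<lambda>_. borel) H UNIV
          \<longrightarrow> (\<forall>i. distributed \<Omega> lborel (H i)
                      (\<lambda>z. ennreal (cn_density (d i powr (- al)) z)))
          \<longrightarrow> (\<forall>\<epsilon>>0. (\<lambda>M. measure \<Omega>
                 {\<omega> \<in> space \<Omega>. \<bar>zeta st2 sv2 d al (\<lambda>i. H i \<omega>) M\<bar> > \<epsilon>})
                 \<longlonglongrightarrow> 0))
     \<comment> \<open>(c)\<close>
     \<and> (\<forall>M::nat. M \<ge> 1 \<longrightarrow> (\<forall>h :: 'n \<Rightarrow> complex. (\<forall>i. h i \<noteq> 0) \<longrightarrow>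
         (let L = 1 / (1 / st2 + (\<Sum>i\<in>UNIV. 1 / sv2 i)) in
           (\<forall>P>0. L \<le> MSE_multi st2 sn2 sv2 d al M P
                  \<and> L \<le> MSE_single st2 sn2 sv2 h P)
           \<and> (\<forall>P Q. 0 < P \<longrightarrow> P \<le> Q \<longrightarrow>
                  MSE_multi st2 sn2 sv2 d al M Q \<le> MSE_multi st2 sn2 sv2 d al M P
                  \<and> MSE_single st2 sn2 sv2 h Q \<le> MSE_single st2 sn2 sv2 h P)
           \<and> (MSE_multi st2 sn2 sv2 d al M \<longlongrightarrow> L) at_top
           \<and> (MSE_single st2 sn2 sv2 h \<longlongrightarrow> L) at_top)))"
proof -
  define SV where "SV = (\<Sum>i\<in>UNIV. 1 / sv2 i)"
  have SV: "SV > 0" unfolding SV_def by (rule sum_pos) (use sv2 in auto)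
  have st2i: "1 / st2 > 0" using st2 by simp
  have Mm: "MSE_multi st2 sn2 sv2 d al M = (\<lambda>P. 1 / (1 / st2 + GM sn2 sv2 d al M P))" for M
    by (rule ext) (simp add: MSE_multi_def)
  have Ms: "MSE_single st2 sn2 sv2 h = (\<lambda>P. st2 / (1 + S_single st2 sn2 sv2 h P))" for h
    by (rule ext) (simp add: MSE_single_def)
  have LL: "1 / (1 / st2 + SV) = st2 / (1 + st2 * SV)" using st2 SV by (simp add: field_simps)
  have PMpos: "P_M sn2 sv2 d al M > 0" if M: "M \<ge> 1" for M
  proof -
    have "(\<Sum>i\<in>UNIV. sn2 * d i powr al / sv2 i) > 0"
      by (rule sum_pos) (use sn2 sv2 d in \<open>auto intro!: divide_pos_pos mult_pos_pos simp: less_imp_neq[OF d, symmetric]\<close>)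
    then show ?thesis using M by (simp add: P_M_def)
  qed
  show ?thesis
  proof (intro conjI allI impI)
    fix M :: nat assume M: "M \<ge> 1"
    define x where "x = (\<lambda>i. sn2 * d i powr al / (2 * real M * sv2 i))"
    have x: "x \<in> simp_set (P_M sn2 sv2 d al M)"
      unfolding simp_set_def P_M_def x_def using sn2 sv2 d M
      by (auto simp: sum_distrib_left intro!: divide_nonneg_pos mult_nonneg_nonneg sum.cong)
    have "gM sn2 sv2 d al M x = (\<Sum>i\<in>UNIV. 1 / (3 * sv2 i))"
      unfolding gM_def
    proof (rule sum.cong[OF refl])
      fix i
      have c: "sn2 * d i powr al > 0" using sn2 d[of i] by simp
      show "real M * x i / (sn2 * d i powr al + sv2 i * real M * x i) = 1 / (3 * sv2 i)"
        using c sv2[of i] M sn2 d[of i] unfolding x_def by (simp add: field_simps)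
    qed
    also have "\<dots> = (1/3) * SV" unfolding SV_def by (simp add: sum_distrib_left)
    finally have "(1/3) * SV \<le> GM sn2 sv2 d al M (P_M sn2 sv2 d al M)"
      using GM_ge[of sn2 sv2 d x _ al M, OF sn2 sv2 d x] by simp
    then have g: "1 / st2 + (1/3) * SV \<le> 1 / st2 + GM sn2 sv2 d al M (P_M sn2 sv2 d al M)" by simp
    have p: "0 < 1 / st2 + (1/3) * SV" using SV st2i by (simp add: add_pos_pos)
    show "MSE_multi st2 sn2 sv2 d al M (P_M sn2 sv2 d al M)
          \<le> 1 / (1 / st2 + (1/3) * (\<Sum>i\<in>UNIV. 1 / sv2 i))"
      unfolding MSE_multi_def SV_def[symmetric]
      by (rule divide_left_mono[OF g]) (use p g in auto)
  next
    fix h :: "'n \<Rightarrow> complex" and M :: nat assume hnz: "\<forall>i. h i \<noteq> 0" and M: "M \<ge> 1"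
    define P where "P = P_M sn2 sv2 d al M"
    have P: "P > 0" unfolding P_def using PMpos[OF M] .
    have Sle: "S_single st2 sn2 sv2 h P \<le> zeta st2 sv2 d al h M"
    proof -
      have e1: "(\<Sum>i\<in>UNIV. sn2 * d i powr al / sv2 i) = sn2 * (\<Sum>i\<in>UNIV. d i powr al / sv2 i)"
        by (simp add: sum_distrib_left)
      have e2: "(\<Sum>i\<in>UNIV. st2 * d i powr al / sv2 i) = st2 * (\<Sum>i\<in>UNIV. d i powr al / sv2 i)"
        by (simp add: sum_distrib_left)
      have "S_single st2 sn2 sv2 h P \<le> st2 * P * (\<Sum>i\<in>UNIV. (cmod (h i))\<^sup>2) / sn2"
        by (rule S_le2[of st2 sn2 sv2, OF st2 sn2 sv2]) (use P in simp)
      also have "\<dots> = zeta st2 sv2 d al h M"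
        unfolding P_def P_M_def zeta_def e1 e2 using sn2 by (simp add: field_simps)
      finally show ?thesis .
    qed
    have S0: "0 \<le> S_single st2 sn2 sv2 h P" by (rule S_nonneg[of st2 sn2 sv2, OF st2 sn2 sv2]) (use P in simp)
    have Sp: "0 < S_single st2 sn2 sv2 h P" by (rule S_pos[of st2 sn2 sv2, OF st2 sn2 sv2 hnz P])
    show "st2 / (1 + zeta st2 sv2 d al h M) \<le> MSE_single st2 sn2 sv2 h (P_M sn2 sv2 d al M)"
      unfolding MSE_single_def P_def[symmetric] using Sle S0 st2
      by (intro divide_left_mono) auto
    show "MSE_single st2 sn2 sv2 h (P_M sn2 sv2 d al M) < st2"
      unfolding MSE_single_def P_def[symmetric] using Sp st2
      by (simp add: divide_simps)
  next
    fix \<Omega> :: "'w measure" and H :: "'n \<Rightarrow> 'w \<Rightarrow> complex" and \<epsilon> :: real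
    assume P: "prob_space \<Omega>" and ind: "prob_space.indep_vars \<Omega> (\<lambda>_. borel) H UNIV"
      and dist: "\<forall>i. distributed \<Omega> lborel (H i) (\<lambda>z. ennreal (cn_density (d i powr (- al)) z))"
      and e: "\<epsilon> > 0"
    have Hm: "H i \<in> borel_measurable \<Omega>" for i
      using distributed_measurable[OF dist[rule_format, of i]]
      by (simp add: measurable_cong_sets[OF refl sets_lborel])
    show "(\<lambda>M. measure \<Omega> {\<omega> \<in> space \<Omega>. \<bar>zeta st2 sv2 d al (\<lambda>i. H i \<omega>) M\<bar> > \<epsilon>}) \<longlonglongrightarrow> 0"
      by (rule prob_part[of st2 sv2 d, OF st2 sv2 d P Hm e])
  next
    fix M :: nat and h :: "'n \<Rightarrow> complex" assume M: "M \<ge> 1" and hnz: "\<forall>i. h i \<noteq> 0"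
    have lb: "1 / (1 / st2 + SV) \<le> MSE_multi st2 sn2 sv2 d al M P
           \<and> 1 / (1 / st2 + SV) \<le> MSE_single st2 sn2 sv2 h P" if P: "P > 0" for P
    proof
      have "GM sn2 sv2 d al M P \<le> SV" "0 \<le> GM sn2 sv2 d al M P"
        using GM_le[of sn2 sv2 d, OF sn2 sv2 d] GM_nonneg[of sn2 sv2 d, OF sn2 sv2 d] P unfolding SV_def by auto
      then show "1 / (1 / st2 + SV) \<le> MSE_multi st2 sn2 sv2 d al M P"
        unfolding MSE_multi_def using st2i by (intro inv_mono_aux) auto
      have "S_single st2 sn2 sv2 h P \<le> st2 * SV" "0 \<le> S_single st2 sn2 sv2 h P"
        using S_le1[of st2 sn2 sv2, OF st2 sn2 sv2] S_nonneg[of st2 sn2 sv2, OF st2 sn2 sv2] P unfolding SV_def by auto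
      then show "1 / (1 / st2 + SV) \<le> MSE_single st2 sn2 sv2 h P"
        unfolding MSE_single_def LL using st2 by (intro inv_mono_aux) auto
    qed
    have mono: "MSE_multi st2 sn2 sv2 d al M Q \<le> MSE_multi st2 sn2 sv2 d al M P
           \<and> MSE_single st2 sn2 sv2 h Q \<le> MSE_single st2 sn2 sv2 h P" if PQ: "0 < P" "P \<le> Q" for P Q
    proof
      have "GM sn2 sv2 d al M P \<le> GM sn2 sv2 d al M Q" "0 \<le> GM sn2 sv2 d al M P"
        using GM_mono[of sn2 sv2 d, OF sn2 sv2 d] GM_nonneg[of sn2 sv2 d, OF sn2 sv2 d] PQ by auto
      then show "MSE_multi st2 sn2 sv2 d al M Q \<le> MSE_multi st2 sn2 sv2 d al M P"
        unfolding MSE_multi_def using st2i by (intro inv_mono_aux) auto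
      have "S_single st2 sn2 sv2 h P \<le> S_single st2 sn2 sv2 h Q" "0 \<le> S_single st2 sn2 sv2 h P"
        using S_mono[of st2 sn2 sv2, OF st2 sn2 sv2] S_nonneg[of st2 sn2 sv2, OF st2 sn2 sv2] PQ by auto
      then show "MSE_single st2 sn2 sv2 h Q \<le> MSE_single st2 sn2 sv2 h P"
        unfolding MSE_single_def using st2 by (intro inv_mono_aux) auto
    qed
    have nz: "1 / st2 + SV \<noteq> 0" using SV st2i by (simp add: add_pos_pos less_imp_neq[symmetric])
    have l1: "(MSE_multi st2 sn2 sv2 d al M \<longlongrightarrow> 1 / (1 / st2 + SV)) at_top"
      unfolding Mm using GM_lim[of sn2 sv2 d, OF sn2 sv2 d M] nz unfolding SV_def
      by (intro tendsto_divide tendsto_add tendsto_const) auto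
    have l2: "(MSE_single st2 sn2 sv2 h \<longlongrightarrow> 1 / (1 / st2 + SV)) at_top"
    proof -
      have "1 + st2 * SV > 0" using SV st2 by (simp add: add_pos_pos)
      then show ?thesis
        unfolding Ms LL using S_lim[of st2 sn2 sv2, OF st2 sn2 sv2 hnz] unfolding SV_def
        by (intro tendsto_divide tendsto_add tendsto_const) auto
    qed
    show "let L = 1 / (1 / st2 + (\<Sum>i\<in>UNIV. 1 / sv2 i)) in
           (\<forall>P>0. L \<le> MSE_multi st2 sn2 sv2 d al M P
                  \<and> L \<le> MSE_single st2 sn2 sv2 h P)
           \<and> (\<forall>P Q. 0 < P \<longrightarrow> P \<le> Q \<longrightarrow>
                  MSE_multi st2 sn2 sv2 d al M Q \<le> MSE_multi st2 sn2 sv2 d al M P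
                  \<and> MSE_single st2 sn2 sv2 h Q \<le> MSE_single st2 sn2 sv2 h P)
           \<and> (MSE_multi st2 sn2 sv2 d al M \<longlongrightarrow> L) at_top
           \<and> (MSE_single st2 sn2 sv2 h \<longlongrightarrow> L) at_top"
      unfolding Let_def SV_def[symmetric] using lb mono l1 l2 by blast
  qed
qed

end
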